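(* Let $K\subseteq\mathbb{C}$ be a field containing all roots of unity. Suppose $\{a_1,\dots,a_r\}\subseteq K^{\times}$ is simple in $K$, and $b_1,\dots,b_r$ are elements of an extension field of $K$ such that the multiplicative subgroup $\langle b_1,\dots,b_r\rangle$ contains $\langle a_1,\dots,a_r\rangle$. Then $\{b_1,\dots,b_r\}$ is simple in $K(b_1,\dots,b_r)$.
   Context: For a field $E$, a tuple $\{c_1,\dots,c_k\}\subseteq E^{\times}$ is simple in $E$ if it is multiplicatively independent ($c_1^{n_1}\cdots c_k^{n_k}=1$ with $n_i\in\mathbb{Z}$ only if all $n_i=0$) and the subgroup $\langle c_1,\dots,c_k\rangle$ is pure in $E^{\times}$ (whenever $x^n=c$, $c\in\langle c_1,\dots,c_k\rangle$, $n\ge1$, has a solution in $E^\times$, it has one in $\langle c_1,\dots,c_k\rangle$). *)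

theory Defs
  imports Complex_Main
begin

definition subfield_of :: "'a::field set \<Rightarrow> bool" where
  "subfield_of F \<longleftrightarrow> 0 \<in> F \<and> 1 \<in> F \<and>
     (\<forall>x\<in>F. \<forall>y\<in>F. x + y \<in> F \<and> x * y \<in> F) \<and>
     (\<forall>x\<in>F. - x \<in> F \<and> inverse x \<in> F)"

definition adjoin :: "'a::field set \<Rightarrow> (nat \<Rightarrow> 'a) \<Rightarrow> nat \<Rightarrow> 'a set" where
  "adjoin F c r = \<Inter>{E. subfield_of E \<and> F \<subseteq> E \<and> c ` {..<r} \<subseteq> E}"

definition mult_span :: "(nat \<Rightarrow> 'a::field) \<Rightarrow> nat \<Rightarrow> 'a set" where
  "mult_span c r = {\<Prod>i<r. c i powi n i | n :: nat \<Rightarrow> int. True}"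

definition mult_indep :: "(nat \<Rightarrow> 'a::field) \<Rightarrow> nat \<Rightarrow> bool" where
  "mult_indep c r \<longleftrightarrow>
     (\<forall>n :: nat \<Rightarrow> int. (\<Prod>i<r. c i powi n i) = 1 \<longrightarrow> (\<forall>i<r. n i = 0))"

definition pure_in :: "'a::field set \<Rightarrow> 'a set \<Rightarrow> bool" where
  "pure_in H E \<longleftrightarrow>
     (\<forall>h\<in>H. \<forall>m::nat. m \<ge> 1 \<longrightarrow> (\<exists>x\<in>E - {0}. x ^ m = h) \<longrightarrow> (\<exists>y\<in>H. y ^ m = h))"

definition simple_in :: "'a::field set \<Rightarrow> (nat \<Rightarrow> 'a) \<Rightarrow> nat \<Rightarrow> bool" where
  "simple_in E c r \<longleftrightarrow> (\<forall>i<r. c i \<in> E - {0}) \<and> mult_indep c r \<and> pure_in (mult_span c r) E"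

text \<open>K (a subfield of an ambient field) is isomorphic, via a field embedding \<sigma>, to a subfield
of \<complex> that contains all complex roots of unity.\<close>
definition complex_subfield_with_roots_of_unity :: "'a::field set \<Rightarrow> bool" where
  "complex_subfield_with_roots_of_unity K \<longleftrightarrow>
     (\<exists>\<sigma> :: 'a \<Rightarrow> complex. inj_on \<sigma> K \<and> \<sigma> 1 = 1 \<and>
        (\<forall>x\<in>K. \<forall>y\<in>K. \<sigma> (x + y) = \<sigma> x + \<sigma> y \<and> \<sigma> (x * y) = \<sigma> x * \<sigma> y) \<and>
        (\<forall>z::complex. (\<exists>n::nat. n \<ge> 1 \<and> z ^ n = 1) \<longrightarrow> z \<in> \<sigma> ` K))"

end

theory Submission
  imports Defs "HOL-Computational_Algebra.Polynomial" "Jordan_Normal_Form.Determinant"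
begin


lemma sf_simps:
  assumes "subfield_of F"
  shows "0 \<in> F" "1 \<in> F" "x \<in> F \<Longrightarrow> y \<in> F \<Longrightarrow> x + y \<in> F"
    "x \<in> F \<Longrightarrow> y \<in> F \<Longrightarrow> x * y \<in> F" "x \<in> F \<Longrightarrow> - x \<in> F"
    "x \<in> F \<Longrightarrow> inverse x \<in> F"
  using assms unfolding subfield_of_def by auto

lemma sf_diff: "subfield_of F \<Longrightarrow> x \<in> F \<Longrightarrow> y \<in> F \<Longrightarrow> x - y \<in> F"
  using sf_simps[of F] by (metis diff_conv_add_uminus)

lemma sf_divide: "subfield_of F \<Longrightarrow> x \<in> F \<Longrightarrow> y \<in> F \<Longrightarrow> x / y \<in> F"
  using sf_simps[of F] by (metis divide_inverse)

lemma sf_power: "subfield_of F \<Longrightarrow> x \<in> F \<Longrightarrow> x ^ n \<in> F"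
  by (induction n) (auto simp: sf_simps)

lemma sf_power_int: "subfield_of F \<Longrightarrow> x \<in> F \<Longrightarrow> x powi n \<in> F"
  by (auto simp: power_int_def sf_power sf_simps)

lemma sf_sum: "subfield_of F \<Longrightarrow> (\<And>i. i \<in> S \<Longrightarrow> f i \<in> F) \<Longrightarrow> sum f S \<in> F"
  by (induction S rule: infinite_finite_induct) (auto simp: sf_simps)

lemma sf_prod: "subfield_of F \<Longrightarrow> (\<And>i. i \<in> S \<Longrightarrow> f i \<in> F) \<Longrightarrow> prod f S \<in> F"
  by (induction S rule: infinite_finite_induct) (auto simp: sf_simps)

lemma sigma_power:
  assumes "subfield_of K" "\<sigma> 1 = 1" "\<forall>x\<in>K. \<forall>y\<in>K. \<sigma> (x * y) = \<sigma> x * \<sigma> y" "x \<in> K"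
  shows "\<sigma> (x ^ n) = \<sigma> x ^ n"
  using assms by (induction n) (auto simp: sf_power)

lemma roots_unity_in_K:
  fixes K :: "'a::field set"
  assumes K: "subfield_of K" and C: "complex_subfield_with_roots_of_unity K"
    and z: "z ^ n = 1" and n: "n \<ge> 1"
  shows "z \<in> K"
proof -
  obtain \<sigma> :: "'a \<Rightarrow> complex" where inj: "inj_on \<sigma> K" and s1: "\<sigma> 1 = 1"
    and hom: "\<forall>x\<in>K. \<forall>y\<in>K. \<sigma> (x + y) = \<sigma> x + \<sigma> y \<and> \<sigma> (x * y) = \<sigma> x * \<sigma> y"
    and sur: "\<forall>z::complex. (\<exists>n::nat. n \<ge> 1 \<and> z ^ n = 1) \<longrightarrow> z \<in> \<sigma> ` K"
    using C unfolding complex_subfield_with_roots_of_unity_def by blast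
  have homm: "\<forall>x\<in>K. \<forall>y\<in>K. \<sigma> (x * y) = \<sigma> x * \<sigma> y" using hom by blast
  define R where "R = {x\<in>K. x ^ n = 1}"
  have "{w::complex. w ^ n = 1} \<subseteq> \<sigma> ` R"
  proof
    fix w :: complex assume "w \<in> {w. w ^ n = 1}"
    then have "w ^ n = 1" by simp
    then obtain x where x: "x \<in> K" "\<sigma> x = w" using sur n by blast
    have "\<sigma> (x ^ n) = \<sigma> 1" using sigma_power[OF K s1 homm x(1)] x s1 \<open>w^n = 1\<close> by simp
    then have "x ^ n = 1" using inj x(1) sf_power[OF K x(1)] sf_simps(2)[OF K]
      by (meson inj_onD)
    then show "w \<in> \<sigma> ` R" using x R_def by auto
  qed
  define P :: "'a poly" where "P = [:-1:] + monom 1 n"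
  have polyP: "poly P x = x ^ n - 1" for x by (simp add: P_def poly_monom)
  have degP: "degree P = n" using n unfolding P_def
    by (subst degree_add_eq_right) (auto simp: degree_monom_eq)
  have P0: "P \<noteq> 0" using degP n by auto
  have fin: "finite {x. poly P x = 0}" using poly_roots_finite[OF P0] .
  have cR: "card {x. poly P x = 0} \<le> n" using card_poly_roots_bound[OF P0] degP by simp
  have RS: "R \<subseteq> {x. poly P x = 0}" by (auto simp: R_def polyP)
  have "n = card {w::complex. w ^ n = 1}" using card_roots_unity_eq n by simp
  also have "\<dots> \<le> card (\<sigma> ` R)"
    by (intro card_mono) (use \<open>{w::complex. w ^ n = 1} \<subseteq> \<sigma> ` R\<close> RS fin in \<open>auto intro: finite_subset\<close>)
  also have "\<dots> \<le> card R" by (rule card_image_le) (use RS fin in \<open>auto intro: finite_subset\<close>)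
  finally have "card {x. poly P x = 0} \<le> card R" using cR by simp
  then have "R = {x. poly P x = 0}" using card_seteq[OF fin RS] by simp
  then show ?thesis using z by (auto simp: R_def polyP)
qed

lemma prime_root_in_K:
  fixes K :: "'a::field set" and p :: nat
  assumes K: "subfield_of K" and C: "complex_subfield_with_roots_of_unity K"
    and p: "prime p"
  shows "\<exists>\<zeta>\<in>K. \<zeta> ^ p = 1 \<and> \<zeta> \<noteq> 1"
proof -
  obtain \<sigma> :: "'a \<Rightarrow> complex" where inj: "inj_on \<sigma> K" and s1: "\<sigma> 1 = 1"
    and hom: "\<forall>x\<in>K. \<forall>y\<in>K. \<sigma> (x + y) = \<sigma> x + \<sigma> y \<and> \<sigma> (x * y) = \<sigma> x * \<sigma> y"
    and sur: "\<forall>z::complex. (\<exists>n::nat. n \<ge> 1 \<and> z ^ n = 1) \<longrightarrow> z \<in> \<sigma> ` K"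
    using C unfolding complex_subfield_with_roots_of_unity_def by blast
  have p1: "p > 1" using p prime_gt_1_nat by blast
  define w where "w = cis (2 * pi / real p)"
  have "w ^ p = cis (2 * pi)" unfolding w_def DeMoivre using p1 by simp
  then have wp: "w ^ p = 1" by (simp add: complex_eq_iff)
  have "w \<noteq> 1"
  proof
    assume "w = 1"
    then have "cos (2 * pi / real p) = 1" unfolding w_def by (metis cis.sel(1) one_complex.sel(1))
    then obtain m :: int where m: "2 * pi / real p = real_of_int m * 2 * pi"
      using cos_one_2pi_int by blast
    then have "real_of_int m = 1 / real p" using pi_gt_zero p1 by (auto simp: field_simps)
    moreover have "0 < 1 / real p" "1 / real p < 1" using p1 by auto
    ultimately have "0 < m" "m < 1" by linarith+
    then show False by linarith
  qed
  have "w \<in> \<sigma> ` K" using sur wp p1 by (meson less_imp_le)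
  then obtain z where z: "z \<in> K" "\<sigma> z = w" by blast
  have "z \<noteq> 1" using z s1 \<open>w \<noteq> 1\<close> by auto
  moreover have "z ^ p = 1" using roots_unity_in_K
  proof -
    have homm: "\<forall>x\<in>K. \<forall>y\<in>K. \<sigma> (x * y) = \<sigma> x * \<sigma> y" using hom by blast
    have "\<sigma> (z ^ p) = \<sigma> 1" using sigma_power[OF K s1 homm z(1)] z s1 wp by simp
    then show ?thesis using inj z(1) sf_power[OF K z(1)] sf_simps(2)[OF K] by (meson inj_onD)
  qed
  ultimately show ?thesis using z by blast
qed


definition polyF :: "'a::field set \<Rightarrow> 'a poly \<Rightarrow> bool" where
  "polyF F f \<longleftrightarrow> (\<forall>i. coeff f i \<in> F)"

lemma polyF_add: "subfield_of F \<Longrightarrow> polyF F f \<Longrightarrow> polyF F g \<Longrightarrow> polyF F (f + g)"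
  by (auto simp: polyF_def sf_simps)
lemma polyF_diff: "subfield_of F \<Longrightarrow> polyF F f \<Longrightarrow> polyF F g \<Longrightarrow> polyF F (f - g)"
  by (auto simp: polyF_def sf_diff)
lemma polyF_mult: "subfield_of F \<Longrightarrow> polyF F f \<Longrightarrow> polyF F g \<Longrightarrow> polyF F (f * g)"
  by (auto simp: polyF_def coeff_mult intro!: sf_sum sf_simps)
lemma polyF_smult: "subfield_of F \<Longrightarrow> a \<in> F \<Longrightarrow> polyF F g \<Longrightarrow> polyF F (smult a g)"
  by (auto simp: polyF_def intro!: sf_simps)
lemma polyF_monom: "subfield_of F \<Longrightarrow> a \<in> F \<Longrightarrow> polyF F (monom a n)"
  by (auto simp: polyF_def coeff_monom sf_simps)
lemma polyF_const: "subfield_of F \<Longrightarrow> a \<in> F \<Longrightarrow> polyF F [:a:]"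
  by (auto simp: polyF_def coeff_pCons sf_simps split: nat.splits)
lemma polyF_power: "subfield_of F \<Longrightarrow> polyF F f \<Longrightarrow> polyF F (f ^ n)"
  by (induction n) (auto intro: polyF_mult polyF_const[of F 1, simplified] simp: sf_simps one_pCons)
lemma polyF_sum: "subfield_of F \<Longrightarrow> (\<And>i. i \<in> S \<Longrightarrow> polyF F (f i)) \<Longrightarrow> polyF F (sum f S)"
  by (induction S rule: infinite_finite_induct) (auto intro: polyF_add simp: polyF_def sf_simps)
lemma polyF_poly: "subfield_of F \<Longrightarrow> polyF F f \<Longrightarrow> x \<in> F \<Longrightarrow> poly f x \<in> F"
  by (auto simp: poly_altdef polyF_def intro!: sf_sum sf_simps sf_power)

lemma coeff_monom_sum: "coeff (\<Sum>i<m. monom (a i) i) n = (if n < m then a n else 0)"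
  by (simp add: coeff_sum coeff_monom)
lemma poly_monom_sum: "poly (\<Sum>i<m. monom (a i) i) x = (\<Sum>i<m. a i * x ^ i)" for x :: "'a::field"
  by (simp add: poly_sum poly_monom)
lemma polyF_monom_sum: "subfield_of F \<Longrightarrow> (\<And>i. i < m \<Longrightarrow> a i \<in> F) \<Longrightarrow> polyF F (\<Sum>i<m. monom (a i) i)"
  by (auto simp: polyF_def coeff_monom_sum sf_simps)

lemma degree_lt_if_coeff0:
  assumes "f \<noteq> 0" "\<And>n. n \<ge> m \<Longrightarrow> coeff f n = 0"
  shows "degree f < m"
proof (rule ccontr)
  assume "\<not> degree f < m"
  then have "coeff f (degree f) = 0" using assms(2) by simp
  then show False using assms(1) by simp
qed

lemma degree_monom_sum_lt: "(\<Sum>i<m. monom (a i) i) \<noteq> 0 \<Longrightarrow> degree (\<Sum>i<m. monom (a i) i) < m"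
  by (rule degree_lt_if_coeff0) (auto simp: coeff_monom_sum)

lemma polyF_division:
  fixes f q :: "'a::field poly"
  assumes F: "subfield_of F" and q: "polyF F q" "q \<noteq> 0"
  shows "polyF F f \<Longrightarrow> \<exists>s r. polyF F s \<and> polyF F r \<and> f = s * q + r \<and> (r = 0 \<or> degree r < degree q)"
proof (induction "degree f" arbitrary: f rule: less_induct)
  case less
  show ?case
  proof (cases "f = 0 \<or> degree f < degree q")
    case True
    then show ?thesis using less.prems F by (intro exI[of _ 0] exI[of _ f]) (auto simp: polyF_def sf_simps)
  next
    case False
    then have f0: "f \<noteq> 0" and dq: "degree q \<le> degree f" by auto
    define a where "a = lead_coeff f / lead_coeff q"
    define t where "t = monom a (degree f - degree q)"
    define f' where "f' = f - t * q"
    have aF: "a \<in> F" unfolding a_def using less.prems q(1) by (auto simp: polyF_def intro: sf_divide[OF F])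
    have tF: "polyF F t" unfolding t_def by (rule polyF_monom[OF F aF])
    have f'F: "polyF F f'" unfolding f'_def by (intro polyF_diff polyF_mult F less.prems tF q(1))
    have cf: "coeff f' n = 0" if "n \<ge> degree f" for n
    proof (cases "n = degree f")
      case True
      have "coeff (t * q) n = a * coeff q (degree q)" unfolding t_def coeff_monom_mult using True dq by simp
      also have "\<dots> = lead_coeff f" using q(2) by (simp add: a_def)
      finally show ?thesis using True by (simp add: f'_def)
    next
      case False
      then have n: "n > degree f" using that by simp
      have "coeff f n = 0" using n by (simp add: coeff_eq_0)
      moreover have "coeff (t * q) n = 0" unfolding t_def coeff_monom_mult using n dq
        by (auto simp: coeff_eq_0)
      ultimately show ?thesis by (simp add: f'_def)
    qed
    show ?thesis
    proof (cases "f' = 0")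
      case True
      have "f = t * q + 0" using True by (simp add: f'_def)
      moreover have "polyF F 0" by (simp add: polyF_def sf_simps F)
      ultimately show ?thesis using tF by (intro exI[of _ t] exI[of _ 0] conjI) simp_all
    next
      case False
      then have "degree f' < degree f" using cf degree_lt_if_coeff0 by blast
      then obtain s r where sr: "polyF F s" "polyF F r" "f' = s * q + r" "r = 0 \<or> degree r < degree q"
        using less.hyps f'F by blast
      show ?thesis using sr tF by (intro exI[of _ "s + t"] exI[of _ r])
        (auto simp: f'_def algebra_simps polyF_add F eq_diff_eq)
    qed
  qed
qed

lemma zeta_ord:
  fixes \<zeta> :: "'a::field"
  assumes p: "prime p" and z: "\<zeta> ^ p = 1" "\<zeta> \<noteq> 1"
  shows "\<zeta> ^ n = 1 \<longleftrightarrow> p dvd n"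
proof
  assume zn: "\<zeta> ^ n = 1"
  show "p dvd n"
  proof (rule ccontr)
    assume nd: "\<not> p dvd n"
    then have "n \<noteq> 0" by (metis dvd_0_right)
    have "coprime n p" using nd p using prime_imp_coprime coprime_commute by blast
    then obtain x y where "n * x = p * y + 1" using bezout_nat[OF \<open>n \<noteq> 0\<close>, of p] by auto
    then have "\<zeta> ^ (n * x) = \<zeta> ^ (p * y) * \<zeta>" by (simp add: power_add)
    then show False using zn z by (simp add: power_mult)
  qed
next
  assume "p dvd n" then show "\<zeta> ^ n = 1" using z by (auto simp: power_mult)
qed

lemma zeta_inj:
  fixes \<zeta> :: "'a::field"
  assumes p: "prime p" and z: "\<zeta> ^ p = 1" "\<zeta> \<noteq> 1" and k: "\<not> p dvd k" and \<theta>: "\<theta> \<noteq> 0"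
  shows "inj_on (\<lambda>j. \<zeta> ^ (k * j) * \<theta>) {..<p}"
proof (rule inj_onI)
  have z0: "\<zeta> \<noteq> 0" using z p by (metis prime_gt_0_nat power_0_left zero_neq_one neq0_conv)
  have main: "a = b" if ab: "a < p" "b < p" "a \<le> b" "\<zeta> ^ (k * a) * \<theta> = \<zeta> ^ (k * b) * \<theta>" for a b
  proof -
    have "\<zeta> ^ (k * b) = \<zeta> ^ (k * a) * \<zeta> ^ (k * (b - a))" using ab(3)
      by (metis add_diff_inverse_nat diff_add_inverse2 distrib_left not_le power_add)
    then have "\<zeta> ^ (k * (b - a)) = 1" using ab(4) \<theta> z0 by simp
    then have "p dvd k * (b - a)" using zeta_ord[OF p z] by simp
    then have "p dvd (b - a)" using k p prime_dvd_mult_nat by blast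
    then show "a = b" using ab by (metis diff_less dvd_imp_le le_neq_implies_less less_imp_diff_less not_less zero_less_diff)
  qed
  fix a b assume "a \<in> {..<p}" "b \<in> {..<p}" "\<zeta> ^ (k * a) * \<theta> = \<zeta> ^ (k * b) * \<theta>"
  then show "a = b" using main[of a b] main[of b a] by (cases "a \<le> b") auto
qed


lemma poly_split_top:
  fixes q :: "'a::field poly"
  shows "poly q x = (\<Sum>i<degree q. coeff q i * x ^ i) + lead_coeff q * x ^ degree q"
  by (simp add: poly_altdef lessThan_Suc_atMost[symmetric])

lemma indep_core:
  fixes \<theta> \<zeta> :: "'a::field"
  assumes F: "subfield_of F" and p: "prime p" and zF: "\<zeta> \<in> F" and z: "\<zeta> ^ p = 1" "\<zeta> \<noteq> 1"
    and cF: "\<theta> ^ p \<in> F" and tF: "\<theta> \<notin> F"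
    and gF: "\<forall>i<p. g i \<in> F" and rel: "(\<Sum>i<p. g i * \<theta> ^ i) = 0"
  shows "\<forall>i<p. g i = 0"
proof (rule ccontr)
  assume "\<not> (\<forall>i<p. g i = 0)"
  then obtain j where j: "j < p" "g j \<noteq> 0" by auto
  have t0: "\<theta> \<noteq> 0" using tF sf_simps(1)[OF F] by auto
  have p1: "p > 1" using p prime_gt_1_nat by blast
  define c where "c = \<theta> ^ p"
  define G where "G = (\<Sum>i<p. monom (g i) i)"
  have G0: "G \<noteq> 0" using j by (metis G_def coeff_0 coeff_monom_sum)
  have GF: "polyF F G" unfolding G_def using gF by (intro polyF_monom_sum F) auto
  have Gt: "poly G \<theta> = 0" using rel by (simp add: G_def poly_monom_sum)
  have Gd: "degree G < p" unfolding G_def using G0 G_def degree_monom_sum_lt by blast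
  define S where "S = {n. \<exists>f. polyF F f \<and> f \<noteq> 0 \<and> poly f \<theta> = 0 \<and> degree f = n}"
  define d where "d = (LEAST n. n \<in> S)"
  have "degree G \<in> S" using G0 GF Gt by (auto simp: S_def)
  then have dS: "d \<in> S" and dle: "d \<le> degree G" unfolding d_def by (auto intro: LeastI Least_le)
  then obtain q where q: "polyF F q" "q \<noteq> 0" "poly q \<theta> = 0" "degree q = d" by (auto simp: S_def)
  have minimal: "f = 0" if "polyF F f" "poly f \<theta> = 0" "degree f < d" for f
  proof (rule ccontr)
    assume "f \<noteq> 0"
    then have "degree f \<in> S" using that by (auto simp: S_def)
    then have "d \<le> degree f" unfolding d_def by (rule Least_le)
    then show False using that by simp
  qed
  have dp: "d < p" using dle Gd by simp
  have d1: "d \<ge> 1"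
  proof (rule ccontr)
    assume "\<not> d \<ge> 1"
    then have "degree q = 0" using q by simp
    then have "poly q \<theta> = coeff q 0" by (simp add: poly_altdef)
    moreover have "coeff q 0 \<noteq> 0" using q(2) \<open>degree q = 0\<close> leading_coeff_0_iff by fastforce
    ultimately show False using q(3) by simp
  qed
  define Xc :: "'a poly" where "Xc = monom 1 p - [:c:]"
  have XcF: "polyF F Xc" unfolding Xc_def using cF c_def
    by (intro polyF_diff polyF_monom polyF_const F) (auto simp: sf_simps F)
  have polyXc: "poly Xc x = x ^ p - c" for x by (simp add: Xc_def poly_monom)
  obtain s r where sr: "polyF F s" "polyF F r" "Xc = s * q + r" "r = 0 \<or> degree r < degree q"
    using polyF_division[OF F q(1) q(2) XcF] by blast
  have "poly r \<theta> = 0" using sr(3) polyXc[of \<theta>] q(3) c_def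
    by (metis add_0 diff_self mult_zero_right poly_add poly_mult)
  then have r0: "r = 0" using sr(4) minimal[OF sr(2)] q(4) by blast
  have Xcsq: "Xc = s * q" using sr(3) r0 by simp
  have "Xc = monom 1 p + [:-c:]" by (simp add: Xc_def)
  moreover have "degree (monom (1::'a) p + [:-c:]) = p" using p1
    by (subst degree_add_eq_left) (auto simp: degree_monom_eq)
  ultimately have degXc: "degree Xc = p" by simp
  have s0: "s \<noteq> 0" using Xcsq degXc p1 by auto
  have degs: "degree s + d = p" using Xcsq degXc s0 q(2) q(4) by (simp add: degree_mult_eq)
  have z0: "\<zeta> \<noteq> 0" using z p1 by (metis power_0_left zero_neq_one not_one_less_zero less_trans neq0_conv zero_less_one)
  have noroot: "poly q (\<zeta> ^ k * \<theta>) \<noteq> 0" if k: "0 < k" "k < p" for k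
  proof
    assume root: "poly q (\<zeta> ^ k * \<theta>) = 0"
    define \<omega> where "\<omega> = \<zeta> ^ k"
    have wF: "\<omega> \<in> F" unfolding \<omega>_def using zF by (rule sf_power[OF F])
    define Dp where "Dp = (\<Sum>i<d. monom (coeff q i * (\<omega> ^ d - \<omega> ^ i)) i)"
    have DpF: "polyF F Dp" unfolding Dp_def using q(1) wF
      by (intro polyF_monom_sum F) (auto simp: polyF_def intro!: sf_simps sf_diff sf_power F)
    have "poly Dp \<theta> = \<omega> ^ d * (\<Sum>i<d. coeff q i * \<theta> ^ i) - (\<Sum>i<d. coeff q i * (\<omega> * \<theta>) ^ i)"
      unfolding Dp_def poly_monom_sum by (simp add: sum_distrib_left sum_subtractf[symmetric] algebra_simps power_mult_distrib)
    also have "\<dots> = \<omega> ^ d * (poly q \<theta> - lead_coeff q * \<theta> ^ d) - (poly q (\<omega> * \<theta>) - lead_coeff q * (\<omega> * \<theta>) ^ d)"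
      using poly_split_top[of q \<theta>] poly_split_top[of q "\<omega> * \<theta>"] q(4) by simp
    also have "\<dots> = 0" using q(3) root by (simp add: \<omega>_def algebra_simps power_mult_distrib)
    finally have "poly Dp \<theta> = 0" .
    moreover have "Dp = 0 \<or> degree Dp < d" unfolding Dp_def using degree_monom_sum_lt[of "\<lambda>i. coeff q i * (\<omega> ^ d - \<omega> ^ i)" d] by blast
    ultimately have "Dp = 0" using minimal[OF DpF] by blast
    then have cq: "coeff q i * (\<omega> ^ d - \<omega> ^ i) = 0" if "i < d" for i
      using coeff_monom_sum[of "\<lambda>i. coeff q i * (\<omega> ^ d - \<omega> ^ i)" d i] that by (simp add: Dp_def)
    have scale: "poly q (\<omega> * x) = \<omega> ^ d * poly q x" for x
    proof -
      have "poly q (\<omega> * x) = (\<Sum>i\<le>d. coeff q i * (\<omega> * x) ^ i)" using q(4) by (simp add: poly_altdef)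
      also have "\<dots> = (\<Sum>i\<le>d. \<omega> ^ d * (coeff q i * x ^ i))"
      proof (rule sum.cong)
        fix i assume "i \<in> {..d}"
        then have "coeff q i * \<omega> ^ i = coeff q i * \<omega> ^ d"
          using cq[of i] by (cases "i = d") (auto simp: algebra_simps)
        then have "coeff q i * (\<omega> * x) ^ i = (coeff q i * \<omega> ^ d) * x ^ i"
          by (simp add: power_mult_distrib mult.assoc[symmetric])
        then show "coeff q i * (\<omega> * x) ^ i = \<omega> ^ d * (coeff q i * x ^ i)"
          by (simp add: ac_simps)
      qed simp
      also have "\<dots> = \<omega> ^ d * poly q x" using q(4) by (simp add: poly_altdef sum_distrib_left)
      finally show ?thesis .
    qed
    have allroots: "poly q (\<zeta> ^ (k * j) * \<theta>) = 0" for j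
    proof (induction j)
      case 0 then show ?case using q(3) by simp
    next
      case (Suc j)
      have eq: "\<zeta> ^ (k * Suc j) * \<theta> = \<omega> * (\<zeta> ^ (k * j) * \<theta>)" by (simp add: \<omega>_def power_add algebra_simps)
      show ?case unfolding eq scale Suc.IH by simp
    qed
    have kp: "\<not> p dvd k" using k by (auto dest: dvd_imp_le)
    have inj: "inj_on (\<lambda>j. \<zeta> ^ (k * j) * \<theta>) {..<p}" by (rule zeta_inj[OF p z kp t0])
    have "(\<lambda>j. \<zeta> ^ (k * j) * \<theta>) ` {..<p} \<subseteq> {x. poly q x = 0}" using allroots by auto
    then have "card ((\<lambda>j. \<zeta> ^ (k * j) * \<theta>) ` {..<p}) \<le> card {x. poly q x = 0}"
      by (intro card_mono poly_roots_finite q(2))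
    also have "\<dots> \<le> d" using card_poly_roots_bound[OF q(2)] q(4) by simp
    finally have "p \<le> d" using card_image[OF inj] by simp
    then show False using dp by simp
  qed
  \<comment> \<open>Step C: the other conjugates are roots of s\<close>
  have "(\<lambda>j. \<zeta> ^ (1 * j) * \<theta>) ` {1..<p} \<subseteq> {x. poly s x = 0}"
  proof
    fix x assume "x \<in> (\<lambda>j. \<zeta> ^ (1 * j) * \<theta>) ` {1..<p}"
    then obtain k where k: "1 \<le> k" "k < p" "x = \<zeta> ^ k * \<theta>" by auto
    have "(\<zeta> ^ k * \<theta>) ^ p = (\<zeta> ^ p) ^ k * \<theta> ^ p"
      by (metis power_mult power_mult_distrib mult.commute)
    then have "poly Xc x = 0" using k(3) z(1) by (simp add: polyXc c_def)
    moreover have "poly q x \<noteq> 0" using noroot k by simp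
    ultimately show "x \<in> {x. poly s x = 0}" using Xcsq by simp
  qed
  then have "card ((\<lambda>j. \<zeta> ^ (1 * j) * \<theta>) ` {1..<p}) \<le> card {x. poly s x = 0}"
    by (intro card_mono poly_roots_finite s0)
  also have "\<dots> \<le> degree s" using card_poly_roots_bound[OF s0] .
  moreover have nd1: "\<not> p dvd 1" using p1 by auto
  moreover have "{1..<p} \<subseteq> {..<p}" by auto
  ultimately have "card {1..<p} \<le> degree s"
    using card_image[OF inj_on_subset[OF zeta_inj[OF p z nd1 t0]]] by simp
  then have "d = 1" using degs d1 by simp
  then have "poly q \<theta> = coeff q 0 + coeff q 1 * \<theta>" using q(4) by (simp add: poly_altdef)
  moreover have "coeff q 1 \<noteq> 0" using q(2) q(4) \<open>d = 1\<close> by (metis leading_coeff_0_iff one_neq_zero)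
  ultimately have "\<theta> = - coeff q 0 / coeff q 1" using q(3) by (simp add: field_simps eq_neg_iff_add_eq_0 add.commute)
  moreover have "- coeff q 0 / coeff q 1 \<in> F" using q(1) by (auto simp: polyF_def intro!: sf_divide sf_simps F)
  ultimately show False using tF by simp
qed


definition grp :: "'a::field set \<Rightarrow> bool" where
  "grp H \<longleftrightarrow> 1 \<in> H \<and> 0 \<notin> H \<and> (\<forall>x\<in>H. \<forall>y\<in>H. x * y \<in> H) \<and> (\<forall>x\<in>H. inverse x \<in> H)"

definition KH :: "'a::field set \<Rightarrow> 'a set \<Rightarrow> 'a set" where
  "KH K H = {k * h | k h. k \<in> K - {0} \<and> h \<in> H}"

definition Kummer :: "'a::field set \<Rightarrow> 'a set \<Rightarrow> 'a set \<Rightarrow> bool" where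
  "Kummer K F H \<longleftrightarrow> (\<forall>x\<in>F - {0}. \<forall>N::nat. N \<ge> 1 \<longrightarrow> x ^ N \<in> KH K H \<longrightarrow> x \<in> KH K H)"

definition ext :: "'a::field set \<Rightarrow> 'a \<Rightarrow> 'a set" where
  "ext H t = {h * t powi i | h i. h \<in> H}"

definition Fth :: "'a::field set \<Rightarrow> 'a \<Rightarrow> 'a set" where
  "Fth F t = {poly f t | f. polyF F f}"

lemma grp_power: "grp H \<Longrightarrow> h \<in> H \<Longrightarrow> h ^ n \<in> H"
  by (induction n) (auto simp: grp_def)

lemma grp_powi: "grp H \<Longrightarrow> h \<in> H \<Longrightarrow> h powi i \<in> H"
  by (auto simp: power_int_def grp_power grp_def)

lemma grp_nz: "grp H \<Longrightarrow> h \<in> H \<Longrightarrow> h \<noteq> 0"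
  by (auto simp: grp_def)

lemma grp_div: "grp H \<Longrightarrow> x \<in> H \<Longrightarrow> y \<in> H \<Longrightarrow> x / y \<in> H"
  by (auto simp: grp_def divide_inverse)

lemma ext_grp:
  assumes H: "grp H" and t: "t \<noteq> 0"
  shows "grp (ext H t)"
  unfolding grp_def
proof (intro conjI ballI)
  show "1 \<in> ext H t" unfolding ext_def using H by (auto simp: grp_def intro!: exI[of _ 1] exI[of _ "0::int"])
  show "0 \<notin> ext H t" unfolding ext_def using H t by (auto simp: grp_def)
  fix x y assume x: "x \<in> ext H t" and y: "y \<in> ext H t"
  then obtain h i h' i' where xy: "h \<in> H" "h' \<in> H" "x = h * t powi i" "y = h' * t powi i'"
    by (auto simp: ext_def)
  have "x * y = (h * h') * t powi (i + i')" using xy t by (simp add: power_int_add algebra_simps)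
  moreover have "h * h' \<in> H" using xy H by (auto simp: grp_def)
  ultimately show "x * y \<in> ext H t" unfolding ext_def by blast
  have "inverse x = inverse h * t powi (- i)" using xy t by (simp add: power_int_minus)
  moreover have "inverse h \<in> H" using xy H by (auto simp: grp_def)
  ultimately show "inverse x \<in> ext H t" unfolding ext_def by blast
qed

lemma ext_sub: "H \<subseteq> ext H t"
proof
  fix x assume "x \<in> H"
  moreover have "x = x * t powi 0" by simp
  ultimately show "x \<in> ext H t" unfolding ext_def by blast
qed

lemma t_in_ext: "grp H \<Longrightarrow> t \<in> ext H t"
proof -
  assume "grp H"
  then have "1 \<in> H" by (simp add: grp_def)
  moreover have "t = 1 * t powi 1" by simp
  ultimately show "t \<in> ext H t" unfolding ext_def by blast
qed

lemma theta_coprime_in: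
  fixes t :: "'a::field"
  assumes F: "subfield_of F" and p: "prime p" and s: "0 < s" "s < p" and ts: "t ^ s \<in> F" and tp: "t ^ p \<in> F"
    and t0: "t \<noteq> 0"
  shows "t \<in> F"
proof -
  have "\<not> p dvd s" using s by (auto dest: dvd_imp_le)
  then have "coprime s p" using p prime_imp_coprime coprime_commute by blast
  then obtain x y where xy: "s * x = p * y + 1" using bezout_nat[of s p] s by auto
  have "(t ^ s) ^ x = t ^ (s * x)" by (simp only: power_mult)
  also have "\<dots> = t ^ (p * y) * t" by (simp only: xy power_add power_one_right)
  also have "\<dots> = (t ^ p) ^ y * t" by (simp only: power_mult)
  finally have eq: "(t ^ s) ^ x = (t ^ p) ^ y * t" .
  have "(t ^ p) ^ y \<noteq> 0" using t0 by simp
  then have "t = (t ^ s) ^ x / (t ^ p) ^ y" using eq by (simp add: field_simps)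
  moreover have "(t ^ s) ^ x / (t ^ p) ^ y \<in> F" by (rule sf_divide[OF F sf_power[OF F ts] sf_power[OF F tp]])
  ultimately show ?thesis by simp
qed

locale kstep =
  fixes K F H :: "'a::field set" and \<theta> \<zeta> :: 'a and p :: nat
  assumes K: "subfield_of K" and F: "subfield_of F" and KF: "K \<subseteq> F"
    and ru: "\<And>z n. n \<ge> 1 \<Longrightarrow> z ^ n = 1 \<Longrightarrow> z \<in> K"
    and p: "prime p" and zK: "\<zeta> \<in> K" and z: "\<zeta> ^ p = 1" "\<zeta> \<noteq> 1"
    and H: "grp H" "H \<subseteq> F"
    and tp: "\<theta> ^ p \<in> H" and tF: "\<theta> \<notin> F"
    and kum: "Kummer K F H"
begin

lemma zF: "\<zeta> \<in> F" using zK KF by auto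
lemma cF: "\<theta> ^ p \<in> F" using tp H by auto
lemma t0: "\<theta> \<noteq> 0" using tF sf_simps(1)[OF F] by auto
lemma p1: "p > 1" using p prime_gt_1_nat by blast
lemma z0: "\<zeta> \<noteq> 0" using z p1 by (metis power_0_left zero_neq_one not_one_less_zero less_trans neq0_conv zero_less_one)

definition Xc :: "'a poly" where "Xc = monom 1 p - [:\<theta> ^ p:]"

lemma XcF: "polyF F Xc" unfolding Xc_def using cF
    by (intro polyF_diff polyF_monom polyF_const F) (auto simp: sf_simps F)
lemma polyXc: "poly Xc x = x ^ p - \<theta> ^ p" by (simp add: Xc_def poly_monom)
lemma Xc0: "Xc \<noteq> 0"
proof
  assume "Xc = 0"
  then have "poly Xc 0 = poly Xc 1" by simp
  then show False using polyXc[of 0] polyXc[of 1] p1 by (simp add: power_0_left)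
qed
lemma degXc: "degree Xc = p"
proof -
  have "Xc = monom 1 p + [:-(\<theta> ^ p):]" by (simp add: Xc_def)
  moreover have "degree (monom (1::'a) p + [:-(\<theta> ^ p):]) = p" using p1
    by (subst degree_add_eq_left) (auto simp: degree_monom_eq)
  ultimately show ?thesis by simp
qed

lemma poly_small:
  fixes r :: "'a poly"
  assumes "r = 0 \<or> degree r < p"
  shows "poly r x = (\<Sum>i<p. coeff r i * x ^ i)"
proof -
  have "degree r \<le> p - 1" using assms p1 by auto
  then have "(\<Sum>i\<le>p - 1. monom (coeff r i) i) = r" by (rule poly_as_sum_of_monoms')
  moreover have "{..p - 1} = {..<p}" using p1 by auto
  ultimately have "r = (\<Sum>i<p. monom (coeff r i) i)" by simp
  then show ?thesis using poly_monom_sum[of "coeff r" p x] by simp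
qed

lemma reduce:
  assumes "polyF F f"
  obtains g where "\<forall>i<p. g i \<in> F" "\<And>x. x ^ p = \<theta> ^ p \<Longrightarrow> poly f x = (\<Sum>i<p. g i * x ^ i)"
proof -
  obtain s r where sr: "polyF F s" "polyF F r" "f = s * Xc + r" "r = 0 \<or> degree r < degree Xc"
    using polyF_division[OF F XcF Xc0 assms] by blast
  have "poly f x = (\<Sum>i<p. coeff r i * x ^ i)" if "x ^ p = \<theta> ^ p" for x
    using that sr(3,4) poly_small[of r x] degXc by (simp add: polyXc)
  moreover have "\<forall>i<p. coeff r i \<in> F" using sr(2) by (simp add: polyF_def)
  ultimately show ?thesis using that by blast
qed

lemma uniq:
  assumes "\<forall>i<p. g i \<in> F" "\<forall>i<p. g' i \<in> F" "(\<Sum>i<p. g i * \<theta> ^ i) = (\<Sum>i<p. g' i * \<theta> ^ i)"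
  shows "\<forall>i<p. g i = g' i"
proof -
  have B: "(\<Sum>i<p. (g i - g' i) * \<theta> ^ i) = 0"
    unfolding left_diff_distrib sum_subtractf using assms(3) by simp
  have A: "\<forall>i<p. g i - g' i \<in> F" using assms(1,2) sf_diff[OF F] by blast
  have "\<forall>i<p. g i - g' i = 0"
    using indep_core[OF F p zF z cF tF A B] .
  then show ?thesis by simp
qed

lemma conj_root: "(\<zeta> ^ k * \<theta>) ^ p = \<theta> ^ p"
proof -
  have "(\<zeta> ^ k * \<theta>) ^ p = (\<zeta> ^ p) ^ k * \<theta> ^ p"
    by (metis power_mult power_mult_distrib mult.commute)
  then show ?thesis using z by simp
qed

lemma conj:
  assumes "polyF F f" "poly f \<theta> = 0"
  shows "poly f (\<zeta> ^ k * \<theta>) = 0"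
proof -
  obtain g where g: "\<forall>i<p. g i \<in> F" "\<And>x. x ^ p = \<theta> ^ p \<Longrightarrow> poly f x = (\<Sum>i<p. g i * x ^ i)"
    using reduce[OF assms(1)] by blast
  have "(\<Sum>i<p. g i * \<theta> ^ i) = (\<Sum>i<p. 0 * \<theta> ^ i)" using g(2)[of \<theta>] assms(2) by simp
  moreover have z0F: "\<forall>i<p. (0::'a) \<in> F" using sf_simps(1)[OF F] by simp
  ultimately have "\<forall>i<p. g i = 0" using uniq[OF g(1) z0F] by simp
  then show ?thesis using g(2)[OF conj_root[of k]] by simp
qed

end


lemma sum_single:
  fixes a :: "nat \<Rightarrow> 'a::comm_monoid_add"
  assumes "j < p" "\<And>i. i < p \<Longrightarrow> i \<noteq> j \<Longrightarrow> a i = 0"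
  shows "(\<Sum>i<p. a i) = a j"
proof -
  have "(\<Sum>i<p. a i) = a j + (\<Sum>i\<in>{..<p} - {j}. a i)" using assms(1) by (simp add: sum.remove)
  also have "(\<Sum>i\<in>{..<p} - {j}. a i) = 0" using assms(2) by (intro sum.neutral) auto
  finally show ?thesis by simp
qed

lemma polyF_prod: "subfield_of F \<Longrightarrow> (\<And>i. i \<in> S \<Longrightarrow> polyF F (f i)) \<Longrightarrow> polyF F (prod f S)"
proof (induction S rule: infinite_finite_induct)
  case (infinite A) then show ?case using polyF_const[of F 1] by (simp add: sf_simps one_pCons)
next
  case empty then show ?case using polyF_const[of F 1] by (simp add: sf_simps one_pCons)
next
  case (insert x A) then show ?case by (simp add: polyF_mult)
qed

context kstep begin

lemma Fth_I: "polyF F f \<Longrightarrow> poly f \<theta> \<in> Fth F \<theta>"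
  unfolding Fth_def by blast

lemma Fth_E: "x \<in> Fth F \<theta> \<Longrightarrow> (\<And>f. polyF F f \<Longrightarrow> x = poly f \<theta> \<Longrightarrow> thesis) \<Longrightarrow> thesis"
  unfolding Fth_def by blast

lemma Fth_F: "a \<in> F \<Longrightarrow> a \<in> Fth F \<theta>"
  using Fth_I[OF polyF_const[OF F, of a]] by simp

lemma Fth_t: "\<theta> \<in> Fth F \<theta>"
  using Fth_I[OF polyF_monom[OF F sf_simps(2)[OF F], of 1]] by (simp add: poly_monom)

lemma Fth_add: "x \<in> Fth F \<theta> \<Longrightarrow> y \<in> Fth F \<theta> \<Longrightarrow> x + y \<in> Fth F \<theta>"
  by (metis Fth_E Fth_I polyF_add[OF F] poly_add)

lemma Fth_mult: "x \<in> Fth F \<theta> \<Longrightarrow> y \<in> Fth F \<theta> \<Longrightarrow> x * y \<in> Fth F \<theta>"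
  by (metis Fth_E Fth_I polyF_mult[OF F] poly_mult)

lemma polyF_0: "polyF F 0" by (simp add: polyF_def sf_simps F)

lemma Fth_neg: "x \<in> Fth F \<theta> \<Longrightarrow> - x \<in> Fth F \<theta>"
  by (metis Fth_E Fth_I polyF_diff[OF F polyF_0] poly_diff poly_0 diff_0)

lemma Fth_prod: "(\<And>i. i \<in> S \<Longrightarrow> f i \<in> Fth F \<theta>) \<Longrightarrow> prod f S \<in> Fth F \<theta>"
  by (induction S rule: infinite_finite_induct) (auto intro: Fth_mult Fth_F sf_simps F)

lemma Fth_sumform:
  assumes "\<forall>i<p. g i \<in> F"
  shows "(\<Sum>i<p. g i * \<theta> ^ i) \<in> Fth F \<theta>"
proof -
  have "polyF F (\<Sum>i<p. monom (g i) i)" using assms by (intro polyF_monom_sum F) auto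
  moreover have "poly (\<Sum>i<p. monom (g i) i) \<theta> = (\<Sum>i<p. g i * \<theta> ^ i)" by (rule poly_monom_sum)
  ultimately show ?thesis by (metis Fth_I)
qed

lemma zpow: "(\<zeta> ^ k * x) ^ i = \<zeta> ^ (k * i) * x ^ i"
  by (simp add: power_mult_distrib power_mult)

lemma Fth_inverse:
  assumes y: "y \<in> Fth F \<theta>" "y \<noteq> 0"
  shows "inverse y \<in> Fth F \<theta>"
proof -
  obtain f where f: "polyF F f" "y = poly f \<theta>" using y(1) by (auto simp: Fth_def)
  obtain g where g: "\<forall>i<p. g i \<in> F" "\<And>x. x ^ p = \<theta> ^ p \<Longrightarrow> poly f x = (\<Sum>i<p. g i * x ^ i)"
    using reduce[OF f(1)] by blast
  have yg: "y = (\<Sum>i<p. g i * \<theta> ^ i)" using f(2) g(2)[of \<theta>] by simp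
  define Y where "Y k = (\<Sum>i<p. g i * (\<zeta> ^ k * \<theta>) ^ i)" for k
  define fk where "fk k = (\<Sum>i<p. monom (g i * \<zeta> ^ (k * i)) i)" for k
  have gkF: "\<forall>i<p. g i * \<zeta> ^ (k * i) \<in> F" for k using g(1) zF by (auto intro!: sf_simps[OF F] sf_power[OF F])
  have fkF: "polyF F (fk k)" for k unfolding fk_def using gkF[of k] by (intro polyF_monom_sum F) auto
  have Yfk: "Y k = poly (fk k) \<theta>" for k unfolding Y_def fk_def poly_monom_sum zpow by (simp add: ac_simps)
  have YFth: "Y k \<in> Fth F \<theta>" for k using Fth_I[OF fkF[of k]] Yfk[of k] by simp
  have Y0: "Y 0 = y" unfolding Y_def yg by simp
  have Ynz: "Y k \<noteq> 0" for k
  proof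
    assume "Y k = 0"
    then have "(\<Sum>i<p. (g i * \<zeta> ^ (k * i)) * \<theta> ^ i) = (\<Sum>i<p. 0 * \<theta> ^ i)"
      unfolding Y_def zpow by (simp add: ac_simps)
    moreover have z0F: "\<forall>i<p. (0::'a) \<in> F" using sf_simps(1)[OF F] by simp
    ultimately have "\<forall>i<p. g i * \<zeta> ^ (k * i) = 0" using uniq[OF gkF[of k] z0F] by simp
    then have "\<forall>i<p. g i = 0" using z0 by simp
    then show False using y(2) yg by simp
  qed
  define PP where "PP = (\<Prod>k<p. fk k)"
  have PPF: "polyF F PP" unfolding PP_def using fkF by (intro polyF_prod F)
  define N where "N = (\<Prod>k<p. Y k)"
  have NPP: "N = poly PP \<theta>" unfolding N_def PP_def poly_prod Yfk ..
  have fkshift: "poly (fk k) (\<zeta> * \<theta>) = Y (Suc k)" for k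
    unfolding fk_def poly_monom_sum Y_def
  proof (rule sum.cong)
    fix i assume "i \<in> {..<p}"
    have "(\<zeta> * \<theta>) ^ i = \<zeta> ^ i * \<theta> ^ i" by (simp add: power_mult_distrib)
    moreover have "(\<zeta> ^ Suc k * \<theta>) ^ i = \<zeta> ^ (k * i) * \<zeta> ^ i * \<theta> ^ i"
      unfolding zpow by (simp add: power_add)
    ultimately show "g i * \<zeta> ^ (k * i) * (\<zeta> * \<theta>) ^ i = g i * (\<zeta> ^ Suc k * \<theta>) ^ i"
      by (simp add: ac_simps)
  qed simp
  obtain n where pn: "p = Suc n" using p1 by (cases p) auto
  have Yp: "Y p = Y 0" unfolding Y_def using z by simp
  have "poly PP (\<zeta> * \<theta>) = (\<Prod>k<p. Y (Suc k))" unfolding PP_def poly_prod fkshift ..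
  also have "\<dots> = (\<Prod>k<n. Y (Suc k)) * Y p" unfolding pn by (rule prod.lessThan_Suc)
  also have "\<dots> = N" unfolding N_def pn prod.lessThan_Suc_shift using Yp pn by (simp add: ac_simps)
  finally have NPPz: "poly PP (\<zeta> * \<theta>) = N" .
  obtain h where h: "\<forall>i<p. h i \<in> F" "\<And>x. x ^ p = \<theta> ^ p \<Longrightarrow> poly PP x = (\<Sum>i<p. h i * x ^ i)"
    using reduce[OF PPF] by blast
  have "(\<zeta> ^ 1 * \<theta>) ^ p = \<theta> ^ p" by (rule conj_root)
  then have Nz: "N = (\<Sum>i<p. h i * (\<zeta> * \<theta>) ^ i)" using NPPz h(2)[of "\<zeta> * \<theta>"] by simp
  have Nt: "N = (\<Sum>i<p. h i * \<theta> ^ i)" using NPP h(2)[of \<theta>] by simp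
  have hzF: "\<forall>i<p. h i * \<zeta> ^ i \<in> F" using h(1) zF by (auto intro!: sf_simps[OF F] sf_power[OF F])
  have "(\<Sum>i<p. (h i * \<zeta> ^ i) * \<theta> ^ i) = (\<Sum>i<p. h i * \<theta> ^ i)"
    using Nz Nt by (simp add: power_mult_distrib ac_simps)
  then have hz: "\<forall>i<p. h i * \<zeta> ^ i = h i" using uniq[OF hzF h(1)] by simp
  have hi0: "h i * \<theta> ^ i = 0" if "i < p" "i \<noteq> 0" for i
  proof -
    have "\<not> p dvd i" using that by (auto dest: dvd_imp_le)
    then have "\<zeta> ^ i \<noteq> 1" using zeta_ord[OF p z] by simp
    then have "h i = 0" using hz that by (metis mult_cancel_left1)
    then show ?thesis by simp
  qed
  have "N = h 0 * \<theta> ^ 0" unfolding Nt using p1 hi0 by (intro sum_single) auto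
  then have NF: "N \<in> F" using h(1) p1 by simp
  have N0: "N \<noteq> 0" unfolding N_def using Ynz by simp
  have Nsplit: "N = y * (\<Prod>k<n. Y (Suc k))" unfolding N_def pn prod.lessThan_Suc_shift Y0 ..
  have "inverse y = (\<Prod>k<n. Y (Suc k)) * inverse N" using Nsplit N0 y(2) by (simp add: field_simps)
  moreover have "(\<Prod>k<n. Y (Suc k)) \<in> Fth F \<theta>" by (intro Fth_prod YFth)
  moreover have "inverse N \<in> Fth F \<theta>" using NF by (intro Fth_F sf_simps(6)[OF F])
  ultimately show ?thesis using Fth_mult by simp
qed

lemma Fth_subfield: "subfield_of (Fth F \<theta>)"
  unfolding subfield_of_def
  using Fth_F sf_simps(1,2)[OF F] Fth_add Fth_mult Fth_neg Fth_inverse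
  by (metis inverse_zero)

end


context kstep begin

lemma powi_split:
  "\<theta> powi i = (\<theta> ^ p) powi (i div int p) * \<theta> ^ nat (i mod int p)"
proof -
  have i: "i = int p * (i div int p) + int (nat (i mod int p))" using p1 by simp
  have "\<theta> powi i = \<theta> powi (int p * (i div int p)) * \<theta> powi int (nat (i mod int p))"
    by (subst i) (simp add: power_int_add t0)
  also have "\<theta> powi (int p * (i div int p)) = (\<theta> ^ p) powi (i div int p)"
    by (simp add: power_int_mult)
  also have "\<theta> powi int (nat (i mod int p)) = \<theta> ^ nat (i mod int p)"
    by (rule power_int_of_nat)
  finally show ?thesis .
qed

lemma Fth_kummer: "Kummer K (Fth F \<theta>) (ext H \<theta>)"
  unfolding Kummer_def
proof (intro ballI allI impI)
  fix x :: 'a and N :: nat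
  assume x: "x \<in> Fth F \<theta> - {0}" and N: "N \<ge> 1" and xN: "x ^ N \<in> KH K (ext H \<theta>)"
  obtain k h i where khi: "k \<in> K" "k \<noteq> 0" "h \<in> H" "x ^ N = k * (h * \<theta> powi i)"
    using xN unfolding KH_def ext_def by blast
  define q where "q = i div int p"
  define e where "e = nat (i mod int p)"
  have ep: "e < p" unfolding e_def using p1 by (simp add: nat_less_iff)
  define h1 where "h1 = h * (\<theta> ^ p) powi q"
  have h1H: "h1 \<in> H" unfolding h1_def using khi(3) tp H(1) by (simp add: grp_def grp_powi)
  define \<kappa> where "\<kappa> = k * h1"
  have xNk: "x ^ N = \<kappa> * \<theta> ^ e" using khi(4) powi_split[of i] by (simp add: \<kappa>_def h1_def q_def e_def ac_simps)
  have kF: "\<kappa> \<in> F" unfolding \<kappa>_def using khi(1) KF h1H H(2) by (auto intro: sf_simps[OF F])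
  have k0: "\<kappa> \<noteq> 0" unfolding \<kappa>_def using khi(2) h1H H(1) grp_nz by auto
  obtain f where f: "polyF F f" "x = poly f \<theta>" using x by (auto elim: Fth_E)
  obtain g where g: "\<forall>i<p. g i \<in> F" "\<And>y. y ^ p = \<theta> ^ p \<Longrightarrow> poly f y = (\<Sum>i<p. g i * y ^ i)"
    using reduce[OF f(1)] by blast
  define f0 where "f0 = (\<Sum>i<p. monom (g i) i)"
  have f0F: "polyF F f0" unfolding f0_def using g(1) by (intro polyF_monom_sum F) auto
  have f0x: "poly f0 \<theta> = x" unfolding f0_def poly_monom_sum using f(2) g(2)[of \<theta>] by simp
  define P where "P = f0 ^ N - monom \<kappa> e"
  have PF: "polyF F P" unfolding P_def using f0F kF by (intro polyF_diff polyF_power polyF_monom F)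
  have "poly P \<theta> = 0" unfolding P_def using f0x xNk by (simp add: poly_monom)
  then have "poly P (\<zeta> ^ 1 * \<theta>) = 0" by (rule conj[OF PF])
  then have "poly f0 (\<zeta> * \<theta>) ^ N = \<kappa> * (\<zeta> * \<theta>) ^ e" by (simp add: P_def poly_monom)
  also have "\<dots> = \<zeta> ^ e * (\<kappa> * \<theta> ^ e)" by (simp add: power_mult_distrib)
  finally have x'N: "poly f0 (\<zeta> * \<theta>) ^ N = \<zeta> ^ e * x ^ N" using xNk by simp
  define x' where "x' = poly f0 (\<zeta> * \<theta>)"
  have x0: "x \<noteq> 0" using x by simp
  define \<eta> where "\<eta> = x' / x"
  have etaN: "\<eta> ^ N = \<zeta> ^ e" unfolding \<eta>_def x'_def using x'N x0 by (simp add: power_divide)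
  have "(\<zeta> ^ e) ^ p = (\<zeta> ^ p) ^ e" by (simp only: power_mult[symmetric] mult.commute)
  then have "\<eta> ^ (N * p) = 1" unfolding power_mult etaN using z(1) by simp
  then have etaK: "\<eta> \<in> K" using ru[of "N * p" \<eta>] N p1 by simp
  then have etaF: "\<eta> \<in> F" using KF by auto
  have "x' = \<eta> * x" unfolding \<eta>_def using x0 by simp
  then have E: "(\<Sum>i<p. (g i * \<zeta> ^ i) * \<theta> ^ i) = (\<Sum>i<p. (\<eta> * g i) * \<theta> ^ i)"
    unfolding x'_def f0x[symmetric] unfolding f0_def poly_monom_sum
    by (simp add: sum_distrib_left power_mult_distrib ac_simps)
  have A: "\<forall>i<p. g i * \<zeta> ^ i \<in> F" using g(1) zF by (auto intro!: sf_simps[OF F] sf_power[OF F])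
  have B: "\<forall>i<p. \<eta> * g i \<in> F" using g(1) etaF by (auto intro!: sf_simps[OF F])
  have geq: "\<forall>i<p. g i * \<zeta> ^ i = \<eta> * g i" using uniq[OF A B E] .
  have xs: "x = (\<Sum>i<p. g i * \<theta> ^ i)" using f0x unfolding f0_def poly_monom_sum by simp
  obtain j where j: "j < p" "g j \<noteq> 0"
  proof (rule ccontr)
    assume "\<not> thesis"
    then have "\<forall>i<p. g i = 0" using that by blast
    then show False using xs x0 by simp
  qed
  have "g j * \<zeta> ^ j = \<eta> * g j" using geq j(1) by blast
  then have "g j * \<zeta> ^ j = g j * \<eta>" by (simp only: mult.commute[of \<eta>])
  then have etaj: "\<eta> = \<zeta> ^ j" using j(2) by simp
  have gi0: "g i * \<theta> ^ i = 0" if "i < p" "i \<noteq> j" for i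
  proof -
    have nd1: "\<not> p dvd 1" using p1 by auto
    have "\<zeta> ^ (1 * i) * 1 \<noteq> \<zeta> ^ (1 * j) * 1"
      using inj_onD[OF zeta_inj[OF p z nd1 one_neq_zero], of i j] that j(1) by auto
    then have ne: "\<zeta> ^ i - \<zeta> ^ j \<noteq> 0" by simp
    have "g i * \<zeta> ^ i = \<zeta> ^ j * g i" using geq that etaj by blast
    then have "g i * (\<zeta> ^ i - \<zeta> ^ j) = 0" by (simp add: right_diff_distrib mult.commute)
    then have "g i = 0" using ne by simp
    then show ?thesis by simp
  qed
  have xj: "x = g j * \<theta> ^ j" unfolding xs using j(1) gi0 by (intro sum_single) auto
  define c0 where "c0 = g j"
  have c0F: "c0 \<in> F" "c0 \<noteq> 0" using g(1) j unfolding c0_def by auto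
  define u where "u = (j * N) div p"
  define v where "v = (j * N) mod p"
  have vp: "v < p" unfolding v_def using p1 by simp
  have tjN: "\<theta> ^ (j * N) = (\<theta> ^ p) ^ u * \<theta> ^ v"
  proof -
    have "j * N = p * u + v" unfolding u_def v_def by simp
    then show ?thesis by (simp add: power_add power_mult)
  qed
  have "x ^ N = c0 ^ N * \<theta> ^ (j * N)" by (simp add: xj c0_def power_mult_distrib power_mult)
  then have "c0 ^ N * ((\<theta> ^ p) ^ u * \<theta> ^ v) = \<kappa> * \<theta> ^ e" using xNk tjN by simp
  then have main: "c0 ^ N * (\<theta> ^ p) ^ u * \<theta> ^ v = \<kappa> * \<theta> ^ e" by (simp only: mult.assoc)
  have tpu0: "(\<theta> ^ p) ^ u \<noteq> 0" using t0 by simp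
  show "x \<in> KH K (ext H \<theta>)"
  proof (cases "v = e")
    case True
    then have "c0 ^ N = k * (h1 / (\<theta> ^ p) ^ u)"
      using main t0 tpu0 unfolding \<kappa>_def by (simp add: field_simps)
    moreover have "h1 / (\<theta> ^ p) ^ u \<in> H" by (rule grp_div[OF H(1) h1H grp_power[OF H(1) tp]])
    ultimately have "c0 ^ N \<in> KH K H" using khi(1,2) unfolding KH_def by blast
    then have "c0 \<in> KH K H" using kum c0F N unfolding Kummer_def by blast
    then obtain k' h' where kh': "k' \<in> K" "k' \<noteq> 0" "h' \<in> H" "c0 = k' * h'" unfolding KH_def by blast
    have "x = k' * (h' * \<theta> powi int j)" using xj kh'(4) c0_def by simp
    moreover have "h' * \<theta> powi int j \<in> ext H \<theta>" using kh'(3) unfolding ext_def by blast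
    ultimately show ?thesis using kh' unfolding KH_def by blast
  next
    case False
    have c0N0: "c0 ^ N \<noteq> 0" using c0F by simp
    show ?thesis
    proof (cases "v < e")
      case True
      have "\<theta> ^ e = \<theta> ^ v * \<theta> ^ (e - v)" using True by (simp add: power_add[symmetric])
      then have "c0 ^ N * (\<theta> ^ p) ^ u = \<kappa> * \<theta> ^ (e - v)"
        using main t0 by (simp add: ac_simps)
      then have "\<theta> ^ (e - v) = c0 ^ N * (\<theta> ^ p) ^ u / \<kappa>" using k0 by (simp add: field_simps)
      moreover have "c0 ^ N * (\<theta> ^ p) ^ u / \<kappa> \<in> F"
        by (rule sf_divide[OF F sf_simps(4)[OF F sf_power[OF F c0F(1)] sf_power[OF F cF]] kF])
      ultimately have "\<theta> ^ (e - v) \<in> F" by simp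
      then have "\<theta> \<in> F" using theta_coprime_in[OF F p _ _ _ cF t0, of "e - v"] True ep by simp
      then show ?thesis using tF by simp
    next
      case False
      then have ev: "e < v" using \<open>v \<noteq> e\<close> by simp
      have "\<theta> ^ v = \<theta> ^ e * \<theta> ^ (v - e)" using ev by (simp add: power_add[symmetric])
      then have "c0 ^ N * (\<theta> ^ p) ^ u * \<theta> ^ (v - e) = \<kappa>"
        using main t0 by (simp add: ac_simps)
      then have "\<theta> ^ (v - e) = \<kappa> / (c0 ^ N * (\<theta> ^ p) ^ u)" using c0N0 tpu0 by (simp add: field_simps)
      moreover have "\<kappa> / (c0 ^ N * (\<theta> ^ p) ^ u) \<in> F"
        by (rule sf_divide[OF F kF sf_simps(4)[OF F sf_power[OF F c0F(1)] sf_power[OF F cF]]])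
      ultimately have "\<theta> ^ (v - e) \<in> F" by simp
      then have "\<theta> \<in> F" using theta_coprime_in[OF F p _ _ _ cF t0, of "v - e"] ev vp by simp
      then show ?thesis using tF by simp
    qed
  qed
qed

end


definition goodH :: "'a::field set \<Rightarrow> 'a set \<Rightarrow> bool" where
  "goodH K H \<longleftrightarrow> (\<exists>F. subfield_of F \<and> K \<subseteq> F \<and> H \<subseteq> F \<and> Kummer K F H)"

lemma prime_step:
  fixes K H :: "'a::field set"
  assumes K: "subfield_of K" and ru: "\<forall>z n. n \<ge> 1 \<longrightarrow> z ^ n = 1 \<longrightarrow> z \<in> K"
    and pr: "\<forall>p. prime p \<longrightarrow> (\<exists>\<zeta>\<in>K. \<zeta> ^ p = 1 \<and> \<zeta> \<noteq> 1)"
    and H: "grp H" and t0: "\<theta> \<noteq> 0" and p: "prime p" and tp: "\<theta> ^ p \<in> H" and g: "goodH K H"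
  shows "goodH K (ext H \<theta>)"
proof -
  obtain F where F: "subfield_of F" "K \<subseteq> F" "H \<subseteq> F" "Kummer K F H" using g by (auto simp: goodH_def)
  show ?thesis
  proof (cases "\<theta> \<in> KH K H")
    case True
    then obtain k0 h0 where kh0: "k0 \<in> K" "k0 \<noteq> 0" "h0 \<in> H" "\<theta> = k0 * h0" unfolding KH_def by blast
    have tF: "\<theta> \<in> F" using kh0 F by (auto intro: sf_simps(4)[OF F(1)])
    have sub: "ext H \<theta> \<subseteq> F"
    proof
      fix y assume "y \<in> ext H \<theta>"
      then obtain h i where "h \<in> H" "y = h * \<theta> powi i" unfolding ext_def by blast
      then show "y \<in> F" using F tF by (auto intro: sf_simps(4)[OF F(1)] sf_power_int[OF F(1)])
    qed
    have eqKH: "KH K (ext H \<theta>) = KH K H"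
    proof
      show "KH K (ext H \<theta>) \<subseteq> KH K H"
      proof
        fix y assume "y \<in> KH K (ext H \<theta>)"
        then obtain k h i where khi: "k \<in> K" "k \<noteq> 0" "h \<in> H" "y = k * (h * \<theta> powi i)"
          unfolding KH_def ext_def by blast
        have "y = (k * k0 powi i) * (h * h0 powi i)" using khi(4) kh0(4) by (simp add: power_int_mult_distrib ac_simps)
        moreover have "k * k0 powi i \<in> K" using khi kh0 by (auto intro: sf_simps(4)[OF K] sf_power_int[OF K])
        moreover have "k * k0 powi i \<noteq> 0" using khi kh0 by simp
        moreover have "h * h0 powi i \<in> H" using khi kh0 H by (simp add: grp_def grp_powi)
        ultimately show "y \<in> KH K H" unfolding KH_def by blast
      qed
    next
      show "KH K H \<subseteq> KH K (ext H \<theta>)" unfolding KH_def using ext_sub[of H \<theta>] by blast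
    qed
    have "Kummer K F (ext H \<theta>)" using F(4) unfolding Kummer_def eqKH .
    then show ?thesis using F sub by (auto simp: goodH_def)
  next
    case False
    have tnF: "\<theta> \<notin> F"
    proof
      assume tF: "\<theta> \<in> F"
      have "\<theta> ^ p \<in> KH K H" using tp sf_simps(2)[OF K] unfolding KH_def by force
      then have "\<theta> \<in> KH K H" using F(4) tF t0 p prime_gt_0_nat unfolding Kummer_def
        by (metis DiffI One_nat_def Suc_leI singletonD)
      then show False using False by simp
    qed
    obtain \<zeta> where z: "\<zeta> \<in> K" "\<zeta> ^ p = 1" "\<zeta> \<noteq> 1" using pr p by blast
    interpret ks: kstep K F H \<theta> \<zeta> p
      using K F ru p z H tp tnF by unfold_locales auto
    have sub: "ext H \<theta> \<subseteq> Fth F \<theta>"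
    proof
      fix y assume "y \<in> ext H \<theta>"
      then obtain h i where "h \<in> H" "y = h * \<theta> powi i" unfolding ext_def by blast
      then show "y \<in> Fth F \<theta>" using F ks.Fth_F ks.Fth_t ks.Fth_subfield
        by (auto intro: sf_simps(4)[OF ks.Fth_subfield] sf_power_int[OF ks.Fth_subfield])
    qed
    show ?thesis unfolding goodH_def
      using ks.Fth_subfield ks.Fth_kummer sub F(2) ks.Fth_F by blast
  qed
qed

lemma ext_ext_pow:
  fixes \<theta> :: "'a::field"
  assumes t0: "\<theta> \<noteq> 0"
  shows "ext (ext H (\<theta> ^ m)) \<theta> = ext H \<theta>"
proof
  show "ext (ext H (\<theta> ^ m)) \<theta> \<subseteq> ext H \<theta>"
  proof
    fix y assume "y \<in> ext (ext H (\<theta> ^ m)) \<theta>"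
    then obtain h i j where hij: "h \<in> H" "y = (h * (\<theta> ^ m) powi i) * \<theta> powi j" unfolding ext_def by blast
    have "(\<theta> ^ m) powi i = \<theta> powi (int m * i)" by (simp add: power_int_mult)
    then have "y = h * \<theta> powi (int m * i + j)" using hij(2) t0 by (simp add: power_int_add ac_simps)
    then show "y \<in> ext H \<theta>" using hij(1) unfolding ext_def by blast
  qed
next
  show "ext H \<theta> \<subseteq> ext (ext H (\<theta> ^ m)) \<theta>"
  proof
    fix y assume "y \<in> ext H \<theta>"
    then obtain h j where hj: "h \<in> H" "y = h * \<theta> powi j" unfolding ext_def by blast
    have "h \<in> ext H (\<theta> ^ m)" using hj(1) ext_sub by blast
    then show "y \<in> ext (ext H (\<theta> ^ m)) \<theta>" using hj(2) unfolding ext_def by blast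
  qed
qed

lemma ext_in: "grp H \<Longrightarrow> \<theta> \<in> H \<Longrightarrow> ext H \<theta> = H"
proof
  assume H: "grp H" and t: "\<theta> \<in> H"
  show "ext H \<theta> \<subseteq> H"
  proof
    fix y assume "y \<in> ext H \<theta>"
    then obtain h i where "h \<in> H" "y = h * \<theta> powi i" unfolding ext_def by blast
    then show "y \<in> H" using H t by (simp add: grp_def grp_powi)
  qed
  show "H \<subseteq> ext H \<theta>" by (rule ext_sub)
qed

lemma step_m:
  fixes K :: "'a::field set"
  assumes K: "subfield_of K" and ru: "\<forall>z n. n \<ge> 1 \<longrightarrow> z ^ n = 1 \<longrightarrow> z \<in> K"
    and pr: "\<forall>p. prime p \<longrightarrow> (\<exists>\<zeta>\<in>K. \<zeta> ^ p = 1 \<and> \<zeta> \<noteq> 1)"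
  shows "m \<ge> 1 \<Longrightarrow> grp H \<Longrightarrow> \<theta> \<noteq> 0 \<Longrightarrow> \<theta> ^ m \<in> H \<Longrightarrow> goodH K H \<Longrightarrow> goodH K (ext H \<theta>)"
proof (induction m arbitrary: H rule: less_induct)
  case (less m)
  show ?case
  proof (cases "m = 1")
    case True
    then have "\<theta> \<in> H" using less.prems by simp
    then show ?thesis using ext_in less.prems by metis
  next
    case False
    then have "m \<noteq> 1" by simp
    then obtain p where p: "prime p" "p dvd m" using prime_factor_nat by blast
    then obtain m' where m': "m = p * m'" by blast
    have p1: "p > 1" using p(1) prime_gt_1_nat by blast
    have m'1: "m' \<ge> 1" using m' less.prems(1) by (cases m') auto
    have m'lt: "m' < m" using m' p1 m'1 by simp
    define \<theta>' where "\<theta>' = \<theta> ^ m'"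
    have t'0: "\<theta>' \<noteq> 0" unfolding \<theta>'_def using less.prems by simp
    have "\<theta>' ^ p \<in> H" unfolding \<theta>'_def using less.prems(4) m'
      by (simp add: power_mult[symmetric] mult.commute)
    then have g1: "goodH K (ext H \<theta>')"
      using prime_step[OF K ru pr less.prems(2) t'0 p(1)] less.prems(5) by blast
    have grp1: "grp (ext H \<theta>')" using ext_grp[OF less.prems(2) t'0] .
    have "\<theta> ^ m' \<in> ext H \<theta>'" unfolding \<theta>'_def using t_in_ext[OF less.prems(2)] .
    then have "goodH K (ext (ext H \<theta>') \<theta>)"
      using less.IH[OF m'lt m'1 grp1 less.prems(3) _ g1] by blast
    then show ?thesis unfolding \<theta>'_def using ext_ext_pow[OF less.prems(3)] by simp
  qed
qed


lemma LA:
  fixes M :: "nat \<Rightarrow> nat \<Rightarrow> int" and r :: nat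
  assumes indep: "\<And>w::nat\<Rightarrow>int. (\<forall>i<r. (\<Sum>j<r. w j * M j i) = 0) \<Longrightarrow> (\<forall>j<r. w j = 0)"
  shows "\<exists>D W. D \<noteq> 0 \<and> (\<forall>i<r. \<forall>i'<r. (\<Sum>j<r. W i j * M j i') = (if i = i' then D else 0))"
proof -
  define A where "A = mat r r (\<lambda>(i, j). M j i)"
  have A: "A \<in> carrier_mat r r" unfolding A_def by simp
  have "det A \<noteq> 0"
  proof
    assume "det A = 0"
    then obtain v where v: "v \<in> carrier_vec r" "v \<noteq> 0\<^sub>v r" "A *\<^sub>v v = 0\<^sub>v r"
      using det_0_iff_vec_prod_zero[OF A] by blast
    define w where "w j = v $ j" for j
    have "(\<Sum>j<r. w j * M j i) = 0" if "i < r" for i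
    proof -
      have "(A *\<^sub>v v) $ i = 0" using v(3) that by simp
      moreover have "(A *\<^sub>v v) $ i = (\<Sum>j<r. M j i * v $ j)"
        using that v(1) unfolding A_def by (simp add: mult_mat_vec_def scalar_prod_def atLeast0LessThan row_def)
      ultimately show ?thesis by (simp add: w_def mult.commute)
    qed
    then have "\<forall>j<r. w j = 0" using indep by blast
    then have "v = 0\<^sub>v r" using v(1) by (intro eq_vecI) (auto simp: w_def)
    then show False using v(2) by simp
  qed
  define W where "W i j = adj_mat A $$ (j, i)" for i j
  have "A * adj_mat A = det A \<cdot>\<^sub>m 1\<^sub>m r" using adj_mat(2)[OF A] .
  have entry: "(\<Sum>j<r. W i j * M j i') = (if i = i' then det A else 0)" if "i < r" "i' < r" for i i'
  proof -
    have "(A * adj_mat A) $$ (i', i) = (det A \<cdot>\<^sub>m 1\<^sub>m r) $$ (i', i)" using adj_mat(2)[OF A] by simp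
    moreover have "(A * adj_mat A) $$ (i', i) = (\<Sum>j<r. M j i' * adj_mat A $$ (j, i))"
      using that adj_mat(1)[OF A] A unfolding A_def
      by (simp add: times_mat_def scalar_prod_def atLeast0LessThan row_def col_def)
    moreover have "(det A \<cdot>\<^sub>m 1\<^sub>m r) $$ (i', i) = (if i = i' then det A else 0)" using that by auto
    ultimately show ?thesis by (simp add: W_def mult.commute)
  qed
  show ?thesis using \<open>det A \<noteq> 0\<close> entry by blast
qed


lemma prod_powi: "(\<Prod>i\<in>S. f i) powi w = (\<Prod>i\<in>S. f i powi w)" for f :: "nat \<Rightarrow> 'a::field"
  by (induction S rule: infinite_finite_induct) (auto simp: power_int_mult_distrib)

lemma powi_sum: "x \<noteq> 0 \<Longrightarrow> x powi (\<Sum>j\<in>S. e j) = (\<Prod>j\<in>S. x powi e j)" for x :: "'a::field"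
  by (induction S rule: infinite_finite_induct) (auto simp: power_int_add)

lemma compose:
  fixes b :: "nat \<Rightarrow> 'a::field"
  assumes b0: "\<forall>i<r. b i \<noteq> 0"
  shows "(\<Prod>j<r. (\<Prod>i<r. b i powi M j i) powi w j) = (\<Prod>i<r. b i powi (\<Sum>j<r. w j * M j i))"
proof -
  have "(\<Prod>j<r. (\<Prod>i<r. b i powi M j i) powi w j) = (\<Prod>j<r. \<Prod>i<r. b i powi (M j i * w j))"
    by (simp add: prod_powi power_int_mult)
  also have "\<dots> = (\<Prod>i<r. \<Prod>j<r. b i powi (M j i * w j))" by (rule prod.swap)
  also have "\<dots> = (\<Prod>i<r. b i powi (\<Sum>j<r. w j * M j i))"
    using b0 by (intro prod.cong refl) (simp add: powi_sum mult.commute)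
  finally show ?thesis .
qed

lemma ms_mult:
  fixes c :: "nat \<Rightarrow> 'a::field"
  assumes "\<forall>i<r. c i \<noteq> 0"
  shows "(\<Prod>i<r. c i powi n i) * (\<Prod>i<r. c i powi n' i) = (\<Prod>i<r. c i powi (n i + n' i))"
  using assms by (simp add: prod.distrib[symmetric] power_int_add)

lemma grp_prod: "grp H \<Longrightarrow> (\<And>i. i \<in> S \<Longrightarrow> f i \<in> H) \<Longrightarrow> prod f S \<in> H"
  by (induction S rule: infinite_finite_induct) (auto simp: grp_def)

lemma ms_I: "(\<Prod>i<r. c i powi n i) \<in> mult_span c r"
  unfolding mult_span_def by blast

lemma ms_grp:
  fixes c :: "nat \<Rightarrow> 'a::field"
  assumes c0: "\<forall>i<r. c i \<noteq> 0"
  shows "grp (mult_span c r)"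
  unfolding grp_def
proof (intro conjI ballI)
  show "1 \<in> mult_span c r" using ms_I[where c=c and r=r and n="\<lambda>_. 0"] by simp
  show "0 \<notin> mult_span c r"
  proof
    assume "0 \<in> mult_span c r"
    then obtain n where "0 = (\<Prod>i<r. c i powi n i)" unfolding mult_span_def by blast
    then show False using c0 by (simp add: prod_zero_iff)
  qed
  fix x y assume x: "x \<in> mult_span c r" and y: "y \<in> mult_span c r"
  then obtain n n' where nn: "x = (\<Prod>i<r. c i powi n i)" "y = (\<Prod>i<r. c i powi n' i)"
    unfolding mult_span_def by blast
  have "x * y = (\<Prod>i<r. c i powi (\<lambda>i. n i + n' i) i)" using ms_mult[OF c0] nn by simp
  then show "x * y \<in> mult_span c r" using ms_I[where c=c and r=r and n="\<lambda>i. n i + n' i"] by simp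
  have "x * (\<Prod>i<r. c i powi (- n i)) = (\<Prod>i<r. c i powi 0)" using ms_mult[OF c0, of n "\<lambda>i. - n i"] nn by simp
  then have "x * (\<Prod>i<r. c i powi (- n i)) = 1" by simp
  then have "inverse x = (\<Prod>i<r. c i powi (\<lambda>i. - n i) i)" by (rule inverse_unique)
  then show "inverse x \<in> mult_span c r" using ms_I[where c=c and r=r and n="\<lambda>i. - n i"] by simp
qed

lemma ms_gen:
  fixes c :: "nat \<Rightarrow> 'a::field"
  assumes "j < r"
  shows "c j \<in> mult_span c r"
proof -
  have "(\<Prod>i<r. c i powi (\<lambda>i. if i = j then 1 else 0) i) = (\<Prod>i<r. if i = j then c i else 1)"
    by (intro prod.cong) auto
  also have "\<dots> = c j" using assms by (simp add: prod.delta)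
  finally have "c j = (\<Prod>i<r. c i powi (\<lambda>i. if i = j then 1 else 0) i)" by simp
  then show ?thesis using ms_I[where c=c and r=r and n="\<lambda>i. if i = j then 1 else 0"] by simp
qed


theorem lemma2p16:
  fixes K :: "'a::field set" and a b :: "nat \<Rightarrow> 'a" and r :: nat
  assumes "subfield_of K"
    and "complex_subfield_with_roots_of_unity K"
    and "simple_in K a r"
    and "\<forall>i<r. b i \<noteq> 0"
    and "mult_span a r \<subseteq> mult_span b r"
  shows "simple_in (adjoin K b r) b r"
proof -
  note K = assms(1)
  define A where "A = mult_span a r"
  define B where "B = mult_span b r"
  have aK: "\<forall>i<r. a i \<in> K - {0}" and inda: "mult_indep a r" and pureA: "pure_in A K"
    using assms(3) unfolding simple_in_def A_def by auto
  have a0: "\<forall>i<r. a i \<noteq> 0" using aK by auto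
  have b0: "\<forall>i<r. b i \<noteq> 0" using assms(4) .
  have AB: "A \<subseteq> B" using assms(5) unfolding A_def B_def .
  have grpA: "grp A" unfolding A_def by (rule ms_grp[OF a0])
  have grpB: "grp B" unfolding B_def by (rule ms_grp[OF b0])
  have ru: "\<forall>z n. n \<ge> 1 \<longrightarrow> z ^ n = 1 \<longrightarrow> z \<in> K" using roots_unity_in_K[OF K assms(2)] by blast
  have pr: "\<forall>p. prime p \<longrightarrow> (\<exists>\<zeta>\<in>K. \<zeta> ^ p = 1 \<and> \<zeta> \<noteq> 1)" using prime_root_in_K[OF K assms(2)] by blast
  have "\<forall>j. \<exists>n. j < r \<longrightarrow> a j = (\<Prod>i<r. b i powi n i)"
  proof
    fix j show "\<exists>n. j < r \<longrightarrow> a j = (\<Prod>i<r. b i powi n i)"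
    proof (cases "j < r")
      case True
      then have "a j \<in> B" using ms_gen[of j r a] AB unfolding A_def by blast
      then show ?thesis unfolding B_def mult_span_def by blast
    qed simp
  qed
  then obtain M where M: "\<And>j. j < r \<Longrightarrow> a j = (\<Prod>i<r. b i powi M j i)" by metis
  have aw: "(\<Prod>j<r. a j powi w j) = (\<Prod>i<r. b i powi (\<Sum>j<r. w j * M j i))" for w
  proof -
    have "(\<Prod>j<r. a j powi w j) = (\<Prod>j<r. (\<Prod>i<r. b i powi M j i) powi w j)"
      using M by (intro prod.cong) auto
    also have "\<dots> = (\<Prod>i<r. b i powi (\<Sum>j<r. w j * M j i))" by (rule compose[OF b0])
    finally show ?thesis .
  qed
  have rows: "\<forall>j<r. w j = 0" if "\<forall>i<r. (\<Sum>j<r. w j * M j i) = 0" for w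
  proof -
    have "(\<Prod>j<r. a j powi w j) = 1" unfolding aw using that by simp
    then show ?thesis using inda unfolding mult_indep_def by blast
  qed
  obtain D W where DW: "D \<noteq> 0" "\<forall>i<r. \<forall>i'<r. (\<Sum>j<r. W i j * M j i') = (if i = i' then D else 0)"
    using LA[of r M] rows by blast
  have SI: "(\<Sum>j<r. (\<Sum>i<r. n i * W i j) * M j k) = n k * D" if "k < r" for n k
  proof -
    have "(\<Sum>j<r. (\<Sum>i<r. n i * W i j) * M j k) = (\<Sum>j<r. \<Sum>i<r. n i * W i j * M j k)"
      by (simp add: sum_distrib_right)
    also have "\<dots> = (\<Sum>i<r. \<Sum>j<r. n i * W i j * M j k)" by (rule sum.swap)
    also have "\<dots> = (\<Sum>i<r. n i * (\<Sum>j<r. W i j * M j k))"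
      by (simp add: sum_distrib_left mult.assoc)
    also have "\<dots> = (\<Sum>i<r. if i = k then n i * D else 0)"
      using DW(2) that by (intro sum.cong) auto
    also have "\<dots> = n k * D" using that by simp
    finally show ?thesis .
  qed
  have KI: "(\<Prod>j<r. a j powi (\<Sum>i<r. n i * W i j)) = (\<Prod>k<r. b k powi n k) powi D" for n
  proof -
    have "(\<Prod>j<r. a j powi (\<Sum>i<r. n i * W i j)) = (\<Prod>k<r. b k powi (n k * D))"
      unfolding aw using SI by (intro prod.cong) auto
    also have "\<dots> = (\<Prod>k<r. b k powi n k) powi D" by (simp add: prod_powi power_int_mult)
    finally show ?thesis .
  qed
  have DpowA: "y powi D \<in> A" if yB: "y \<in> B" for y
  proof -
    obtain n where "y = (\<Prod>k<r. b k powi n k)" using yB unfolding B_def mult_span_def by blast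
    then have "y powi D = (\<Prod>j<r. a j powi (\<Sum>i<r. n i * W i j))" using KI by simp
    then show ?thesis unfolding A_def using ms_I[where c=a and r=r and n="\<lambda>j. \<Sum>i<r. n i * W i j"] by simp
  qed
  have indb: "mult_indep b r"
    unfolding mult_indep_def
  proof (rule allI, rule impI)
    fix n :: "nat \<Rightarrow> int" assume n1: "(\<Prod>i<r. b i powi n i) = 1"
    have "(\<Prod>j<r. a j powi (\<Sum>i<r. n i * W i j)) = 1" using KI n1 by simp
    then have w0: "\<forall>j<r. (\<Sum>i<r. n i * W i j) = 0"
      using inda unfolding mult_indep_def by (elim allE[where x="\<lambda>j. \<Sum>i<r. n i * W i j"]) simp
    show "\<forall>i<r. n i = 0"
    proof (intro allI impI)
      fix k assume k: "k < r"
      have "n k * D = 0" using SI[OF k, of n] w0 by simp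
      then show "n k = 0" using DW(1) by simp
    qed
  qed
  define Dn where "Dn = nat \<bar>D\<bar>"
  have Dn1: "Dn \<ge> 1" using DW(1) unfolding Dn_def by simp
  have DnA: "y ^ Dn \<in> A" if "y \<in> B" for y
  proof (cases "D > 0")
    case True
    then have "y powi D = y ^ Dn" unfolding Dn_def by (simp add: power_int_def)
    then show ?thesis using DpowA[OF that] by simp
  next
    case False
    then have "y powi D = inverse (y ^ Dn)" unfolding Dn_def by (simp add: power_int_def power_inverse)
    then have "inverse (y ^ Dn) \<in> A" using DpowA[OF that] by simp
    then have "inverse (inverse (y ^ Dn)) \<in> A" using grpA unfolding grp_def by blast
    then show ?thesis by simp
  qed
  have torsion: "z = 1" if zB: "z \<in> B" and zD: "z ^ Dn = 1" for z
  proof -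
    obtain n where zn: "z = (\<Prod>k<r. b k powi n k)" using zB unfolding B_def mult_span_def by blast
    have "z ^ Dn = z powi int Dn" by simp
    also have "\<dots> = (\<Prod>k<r. b k powi (n k * int Dn))" unfolding zn by (simp add: prod_powi power_int_mult prod_power_distrib)
    finally have "(\<Prod>k<r. b k powi (\<lambda>k. n k * int Dn) k) = 1" using zD by simp
    then have "\<forall>k<r. n k * int Dn = 0"
      using indb unfolding mult_indep_def by (elim allE[where x="\<lambda>k. n k * int Dn"]) simp
    then have "\<forall>k<r. n k = 0" using Dn1 by simp
    then show ?thesis unfolding zn by simp
  qed
  have KB: "c \<in> A" if "c \<in> K" "c \<in> B" for c
  proof -
    have c0: "c \<noteq> 0" using that(2) grpB grp_nz by blast
    have "c ^ Dn \<in> A" using DnA[OF that(2)] .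
    moreover have "\<exists>x\<in>K - {0}. x ^ Dn = c ^ Dn" using that(1) c0 by blast
    ultimately obtain y where y: "y \<in> A" "y ^ Dn = c ^ Dn" using pureA Dn1 unfolding pure_in_def by blast
    have y0: "y \<noteq> 0" using y(1) grpA grp_nz by blast
    have "(c / y) ^ Dn = 1" using y(2) y0 c0 by (simp add: power_divide)
    moreover have "c / y \<in> B" using grp_div[OF grpB that(2)] y(1) AB by blast
    ultimately have "c / y = 1" using torsion by blast
    then show ?thesis using y(1) y0 by simp
  qed
  define Hs where "Hs = rec_nat A (\<lambda>j H. ext H (b j))"
  have Hs0: "Hs 0 = A" and HsS: "Hs (Suc j) = ext (Hs j) (b j)" for j by (simp_all add: Hs_def)
  have goodA: "goodH K A"
  proof -
    have "A \<subseteq> K"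
    proof
      fix y assume "y \<in> A"
      then obtain n where "y = (\<Prod>k<r. a k powi n k)" unfolding A_def mult_span_def by blast
      then show "y \<in> K" using aK by (auto intro!: sf_prod[OF K] sf_power_int[OF K])
    qed
    moreover have "Kummer K K A" unfolding Kummer_def KH_def
    proof (intro ballI allI impI)
      fix x N assume "x \<in> K - {0}"
      moreover have "x = x * 1" by simp
      moreover have "1 \<in> A" using grpA by (simp add: grp_def)
      ultimately show "x \<in> {k * h |k h. k \<in> K - {0} \<and> h \<in> A}" by blast
    qed
    ultimately show ?thesis unfolding goodH_def using K by blast
  qed
  have tower: "j \<le> r \<longrightarrow> grp (Hs j) \<and> goodH K (Hs j) \<and> A \<subseteq> Hs j \<and> Hs j \<subseteq> B \<and> (\<forall>i<j. b i \<in> Hs j)" for j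
  proof (induction j)
    case 0 then show ?case using Hs0 grpA goodA AB by simp
  next
    case (Suc j)
    show ?case
    proof
      assume j: "Suc j \<le> r"
      then have IH: "grp (Hs j)" "goodH K (Hs j)" "A \<subseteq> Hs j" "Hs j \<subseteq> B" "\<forall>i<j. b i \<in> Hs j"
        using Suc by auto
      have bj0: "b j \<noteq> 0" using b0 j by simp
      have bjB: "b j \<in> B" unfolding B_def using ms_gen[of j r b] j by simp
      have "b j ^ Dn \<in> Hs j" using DnA[OF bjB] IH(3) by blast
      then have g: "goodH K (ext (Hs j) (b j))"
        using step_m[OF K ru pr Dn1 IH(1) bj0 _ IH(2)] by blast
      have gr: "grp (ext (Hs j) (b j))" by (rule ext_grp[OF IH(1) bj0])
      have sub: "A \<subseteq> ext (Hs j) (b j)" using IH(3) ext_sub by blast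
      have subB: "ext (Hs j) (b j) \<subseteq> B"
      proof
        fix y assume "y \<in> ext (Hs j) (b j)"
        then obtain h i where "h \<in> Hs j" "y = h * b j powi i" unfolding ext_def by blast
        then show "y \<in> B" using IH(4) bjB grpB by (auto simp: grp_def grp_powi)
      qed
      have bs: "\<forall>i<Suc j. b i \<in> ext (Hs j) (b j)"
        using IH(5) ext_sub t_in_ext[OF IH(1)] by (auto simp: less_Suc_eq)
      show "grp (Hs (Suc j)) \<and> goodH K (Hs (Suc j)) \<and> A \<subseteq> Hs (Suc j) \<and> Hs (Suc j) \<subseteq> B \<and> (\<forall>i<Suc j. b i \<in> Hs (Suc j))"
        unfolding HsS using g gr sub subB bs by blast
    qed
  qed
  then have Hr: "grp (Hs r)" "goodH K (Hs r)" "Hs r \<subseteq> B" "\<forall>i<r. b i \<in> Hs r" by auto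
  have "B \<subseteq> Hs r"
  proof
    fix y assume "y \<in> B"
    then obtain n where "y = (\<Prod>k<r. b k powi n k)" unfolding B_def mult_span_def by blast
    then show "y \<in> Hs r" using Hr(1,4) by (auto intro!: grp_prod grp_powi)
  qed
  then have "Hs r = B" using Hr(3) by blast
  then obtain F where F: "subfield_of F" "K \<subseteq> F" "B \<subseteq> F" "Kummer K F B"
    using Hr(2) unfolding goodH_def by auto
  have bB: "\<forall>i<r. b i \<in> B" unfolding B_def using ms_gen by blast
  have LF: "adjoin K b r \<subseteq> F"
    unfolding adjoin_def using F bB by blast
  have bL: "\<forall>i<r. b i \<in> adjoin K b r - {0}" using b0 unfolding adjoin_def by auto
  have pure: "pure_in B (adjoin K b r)"
    unfolding pure_in_def
  proof (intro ballI allI impI)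
    fix h m assume h: "h \<in> B" and m: "m \<ge> 1" and ex: "\<exists>x\<in>adjoin K b r - {0}. x ^ m = h"
    then obtain x where x: "x \<in> F - {0}" "x ^ m = h" using LF by blast
    have "h = 1 * h" by simp
    moreover have "(1::'a) \<in> K - {0}" using sf_simps(2)[OF K] by simp
    ultimately have "h \<in> KH K B" unfolding KH_def using h by blast
    then have "x \<in> KH K B" using F(4) x m unfolding Kummer_def by blast
    then obtain k y where ky: "k \<in> K" "k \<noteq> 0" "y \<in> B" "x = k * y" unfolding KH_def by blast
    have y0: "y \<noteq> 0" using ky(3) grpB grp_nz by blast
    have "k ^ m = h / y ^ m" using x(2) ky(4) y0 by (simp add: power_mult_distrib field_simps)
    moreover have "h / y ^ m \<in> B" using grp_div[OF grpB h grp_power[OF grpB ky(3)]] .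
    moreover have "k ^ m \<in> K" using sf_power[OF K ky(1)] .
    ultimately have kA: "k ^ m \<in> A" using KB by simp
    have "\<exists>x\<in>K - {0}. x ^ m = k ^ m" using ky by blast
    then obtain y' where y': "y' \<in> A" "y' ^ m = k ^ m" using pureA kA m unfolding pure_in_def by blast
    have "(y * y') ^ m = h" using y'(2) x(2) ky(4) by (simp add: power_mult_distrib mult.commute)
    moreover have "y * y' \<in> B" using grpB ky(3) y'(1) AB by (auto simp: grp_def)
    ultimately show "\<exists>y\<in>B. y ^ m = h" by blast
  qed
  show ?thesis unfolding simple_in_def using bL indb pure B_def by simp
qed


end
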